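(* Consider the basic reproduction numbers $\mathcal{R}_1,\mathcal{R}_2$ described in the context, regarded as functions of the vector-bias parameters $p\ge l>0$ with all other data fixed. They depend on $(p,l)$ only through $q:=l/p\in(0,1]$; writing $\mathcal{R}_i(q)$, one has $$\mathcal{R}_i(q)=\frac{1}{\sqrt{q}}\,\mathcal{R}_i(1),\quad i=1,2,\qquad\text{and hence}\qquad \mathcal{R}_0(q):=\max\{\mathcal{R}_1(q),\mathcal{R}_2(q)\}=\frac{1}{\sqrt q}\max\{\mathcal{R}_1(1),\mathcal{R}_2(1)\},$$ where $\mathcal{R}_i(1)$ is the value when $l=p$. In particular $\mathcal{R}_0$ is decreasing in $q$.
   Context: Let $\Omega\subset\mathbb{R}^m$ be a bounded domain with smooth boundary; Neumann conditions throughout. Constants: $D_h,D_v>0$; $0<d<b$; $\gamma_1,\gamma_2>0$; positive constants $c_1,c_2,\alpha_1,\alpha_2$; $p\ge l>0$; $\omega>0$. $N(x)$ is the globally attractive positive steady state of $\partial_t N=D_h\Delta N+B(x,N)N-dN$ (Neumann), where $K>0$ is continuous on $\bar\Omega$ and $B(x,u)=b(1-u/K(x))$ for $0\le u\le K(x)$, $0$ otherwise. $\Lambda,\eta,\beta$: Hölder continuous, nonnegative, not identically zero on $\mathbb{R}\times\bar\Omega$, $\omega$-periodic in $t$; $M^*(t,x)$ is the globally stable positive $\omega$-periodic solution of $\partial_t M=D_v\Delta M+\Lambda-\eta M$ (Neumann). (Neither $N$ nor $M^*$ depends on $p,l$.) Let $E=C(\bar\Omega,\mathbb{R}^2)$,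 $C_\omega(\mathbb{R},E)$ the space of continuous $\omega$-periodic maps $\mathbb{R}\to E$ with max norm. For $i\in\{1,2\}$, $\Psi_i(t,s)$ is the evolution operator on $E$ of $\partial_t v_1=D_h\Delta v_1-(d+\gamma_i)v_1$, $\partial_t v_2=D_v\Delta v_2-\eta(t,x)v_2$ (Neumann); $\mathcal{F}_i(t)(\psi_1,\psi_2)=(c_i\beta(t,\cdot)\psi_2,\ \alpha_i\beta(t,\cdot)pM^*(t,\cdot)\psi_1/(lN(\cdot)))$; $[\mathcal{L}_iv](t)=\int_0^\infty\Psi_i(t,t-s)\mathcal{F}_i(t-s)v(t-s)ds$ on $C_\omega(\mathbb{R},E)$; $\mathcal{R}_i:=r(\mathcal{L}_i)$, the spectral radius. *)

theory Defs
  imports "HOL-Analysis.Analysis"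
begin

text \<open>Elements of E = C(closure Omega, R^2) are represented as functions
  'a => real * real; elements of C_omega(R,E) as functions real => 'a => real * real
  which are jointly continuous on R x closure Omega, omega-periodic in t, and
  (normalisation) vanish outside closure Omega.  On the compact set closure Omega,
  joint continuity is the same as continuity of t |-> v t in the sup norm of E.\<close>

definition Cw :: "'a::euclidean_space set \<Rightarrow> real \<Rightarrow> (real \<Rightarrow> 'a \<Rightarrow> real \<times> real) set" where
  "Cw \<Omega> \<omega> = {v. continuous_on (UNIV \<times> closure \<Omega>) (\<lambda>z. v (fst z) (snd z))
                 \<and> (\<forall>t. v (t + \<omega>) = v t)
                 \<and> (\<forall>t x. x \<notin> closure \<Omega> \<longrightarrow> v t x = 0)}"

text \<open>Evolution operator of the decoupled linear system: it acts componentwise,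
  U on the first (host) component and V on the second (vector) component.\<close>

definition Psi ::
  "(real \<Rightarrow> real \<Rightarrow> ('a \<Rightarrow> real) \<Rightarrow> ('a \<Rightarrow> real)) \<Rightarrow>
   (real \<Rightarrow> real \<Rightarrow> ('a \<Rightarrow> real) \<Rightarrow> ('a \<Rightarrow> real)) \<Rightarrow>
   real \<Rightarrow> real \<Rightarrow> ('a \<Rightarrow> real \<times> real) \<Rightarrow> ('a \<Rightarrow> real \<times> real)" where
  "Psi U V t s \<phi> = (\<lambda>x. (U t s (\<lambda>y. fst (\<phi> y)) x, V t s (\<lambda>y. snd (\<phi> y)) x))"

definition Fop ::
  "real \<Rightarrow> real \<Rightarrow> (real \<Rightarrow> 'a \<Rightarrow> real) \<Rightarrow> (real \<Rightarrow> 'a \<Rightarrow> real) \<Rightarrow> ('a \<Rightarrow> real) \<Rightarrow>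
   real \<Rightarrow> real \<Rightarrow> real \<Rightarrow> ('a \<Rightarrow> real \<times> real) \<Rightarrow> ('a \<Rightarrow> real \<times> real)" where
  "Fop c \<alpha> \<beta> Mstar N p l t \<psi> =
     (\<lambda>x. (c * \<beta> t x * snd (\<psi> x),
           \<alpha> * \<beta> t x * p * Mstar t x * fst (\<psi> x) / (l * N x)))"

definition Lop ::
  "'a::euclidean_space set \<Rightarrow>
   (real \<Rightarrow> real \<Rightarrow> ('a \<Rightarrow> real) \<Rightarrow> ('a \<Rightarrow> real)) \<Rightarrow>
   (real \<Rightarrow> real \<Rightarrow> ('a \<Rightarrow> real) \<Rightarrow> ('a \<Rightarrow> real)) \<Rightarrow>
   real \<Rightarrow> real \<Rightarrow> (real \<Rightarrow> 'a \<Rightarrow> real) \<Rightarrow> (real \<Rightarrow> 'a \<Rightarrow> real) \<Rightarrow> ('a \<Rightarrow> real) \<Rightarrow>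
   real \<Rightarrow> real \<Rightarrow> (real \<Rightarrow> 'a \<Rightarrow> real \<times> real) \<Rightarrow> (real \<Rightarrow> 'a \<Rightarrow> real \<times> real)" where
  "Lop \<Omega> U V c \<alpha> \<beta> Mstar N p l v =
     (\<lambda>t x. if x \<in> closure \<Omega> then
        (integral {0..} (\<lambda>s. fst (Psi U V t (t - s) (Fop c \<alpha> \<beta> Mstar N p l (t - s) (v (t - s))) x)),
         integral {0..} (\<lambda>s. snd (Psi U V t (t - s) (Fop c \<alpha> \<beta> Mstar N p l (t - s) (v (t - s))) x)))
      else 0)"

text \<open>Spectrum of a real-linear operator A on a real space X, via the
  complexification X + iX: z is in the spectrum iff z - A is not a bijection of X x X.\<close>

definition cspectrum ::
  "(real \<Rightarrow> 'a \<Rightarrow> real \<times> real) set \<Rightarrow>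
   ((real \<Rightarrow> 'a \<Rightarrow> real \<times> real) \<Rightarrow> (real \<Rightarrow> 'a \<Rightarrow> real \<times> real)) \<Rightarrow> complex set" where
  "cspectrum X A = {z. \<not> bij_betw
      (\<lambda>(u, w). (\<lambda>t x. Re z *\<^sub>R u t x - Im z *\<^sub>R w t x - A u t x,
                  \<lambda>t x. Im z *\<^sub>R u t x + Re z *\<^sub>R w t x - A w t x))
      (X \<times> X) (X \<times> X)}"

definition spectral_radius ::
  "(real \<Rightarrow> 'a \<Rightarrow> real \<times> real) set \<Rightarrow>
   ((real \<Rightarrow> 'a \<Rightarrow> real \<times> real) \<Rightarrow> (real \<Rightarrow> 'a \<Rightarrow> real \<times> real)) \<Rightarrow> real" where
  "spectral_radius X A = enn2real (SUP z \<in> cspectrum X A. ennreal (cmod z))"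

definition lin_op :: "(('a \<Rightarrow> real) \<Rightarrow> ('a \<Rightarrow> real)) \<Rightarrow> bool" where
  "lin_op T \<longleftrightarrow> (\<forall>a b f g. T (\<lambda>x. a * f x + b * g x) = (\<lambda>x. a * T f x + b * T g x))"

end

theory Submission
  imports Defs
begin

definition sc :: "real \<Rightarrow> real \<Rightarrow> (real \<Rightarrow> 'a \<Rightarrow> real \<times> real) \<Rightarrow> (real \<Rightarrow> 'a \<Rightarrow> real \<times> real)" where
  "sc a b v = (\<lambda>t x. (a * fst (v t x), b * snd (v t x)))"

definition PP :: "real \<Rightarrow> real \<Rightarrow> (real \<Rightarrow> 'a \<Rightarrow> real \<times> real) \<times> (real \<Rightarrow> 'a \<Rightarrow> real \<times> real)
   \<Rightarrow> (real \<Rightarrow> 'a \<Rightarrow> real \<times> real) \<times> (real \<Rightarrow> 'a \<Rightarrow> real \<times> real)" where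
  "PP a b = (\<lambda>(u, w). (sc a b u, sc a b w))"

definition GG :: "((real \<Rightarrow> 'a \<Rightarrow> real \<times> real) \<Rightarrow> (real \<Rightarrow> 'a \<Rightarrow> real \<times> real)) \<Rightarrow> complex \<Rightarrow>
   (real \<Rightarrow> 'a \<Rightarrow> real \<times> real) \<times> (real \<Rightarrow> 'a \<Rightarrow> real \<times> real)
   \<Rightarrow> (real \<Rightarrow> 'a \<Rightarrow> real \<times> real) \<times> (real \<Rightarrow> 'a \<Rightarrow> real \<times> real)" where
  "GG A z = (\<lambda>(u, w). (\<lambda>t x. Re z *\<^sub>R u t x - Im z *\<^sub>R w t x - A u t x,
                  \<lambda>t x. Im z *\<^sub>R u t x + Re z *\<^sub>R w t x - A w t x))"

lemma cspectrum_GG: "cspectrum X A = {z. \<not> bij_betw (GG A z) (X \<times> X) (X \<times> X)}"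
  unfolding cspectrum_def GG_def by simp

lemma sc_sc: "sc a b (sc c d v) = sc (a*c) (b*d) v"
  by (simp add: sc_def fun_eq_iff)

lemma sc_11: "sc 1 1 v = v"
  by (simp add: sc_def fun_eq_iff)

lemma PP_PP: "PP a b (PP c d q) = PP (a*c) (b*d) q"
  by (cases q) (simp add: PP_def sc_sc)

lemma PP_11: "PP 1 1 q = q"
  by (cases q) (simp add: PP_def sc_11)

lemma lin_op_scale: "lin_op T \<Longrightarrow> T (\<lambda>y. k * f y) = (\<lambda>x. k * T f x)"
  unfolding lin_op_def
  by (drule spec[of _ k], drule spec[of _ 0], drule spec[of _ f], drule spec[of _ f]) simp

lemma Cw_sc: assumes "v \<in> Cw \<Omega> \<omega>" shows "sc a b v \<in> Cw \<Omega> \<omega>"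
proof -
  have c: "continuous_on (UNIV \<times> closure \<Omega>) (\<lambda>z. v (fst z) (snd z))" using assms by (simp add: Cw_def)
  have "continuous_on (UNIV \<times> closure \<Omega>) (\<lambda>z. (a * fst (v (fst z) (snd z)), b * snd (v (fst z) (snd z))))"
    by (intro continuous_intros c)
  then show ?thesis using assms by (auto simp: Cw_def sc_def zero_prod_def)
qed

lemma PP_bij: assumes "a \<noteq> 0" "b \<noteq> 0"
  shows "bij_betw (PP a b) (Cw \<Omega> \<omega> \<times> Cw \<Omega> \<omega>) (Cw \<Omega> \<omega> \<times> Cw \<Omega> \<omega>)"
proof (rule bij_betwI[where g="PP (1/a) (1/b)"])
  show "PP a b \<in> Cw \<Omega> \<omega> \<times> Cw \<Omega> \<omega> \<rightarrow> Cw \<Omega> \<omega> \<times> Cw \<Omega> \<omega>"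
    by (auto simp: PP_def Cw_sc)
  show "PP (1/a) (1/b) \<in> Cw \<Omega> \<omega> \<times> Cw \<Omega> \<omega> \<rightarrow> Cw \<Omega> \<omega> \<times> Cw \<Omega> \<omega>"
    by (auto simp: PP_def Cw_sc)
  fix q show "PP (1/a) (1/b) (PP a b q) = q" using assms by (simp add: PP_PP PP_11)
next
  fix q show "PP a b (PP (1/a) (1/b) q) = q" using assms by (simp add: PP_PP PP_11)
qed

lemma GG_sim:
  assumes r: "r > 0" and AB: "\<And>u. A (sc 1 r u) = sc r (r*r) (B u)"
  shows "GG A z (PP 1 r q) = PP r (r*r) (GG B (z / of_real r) q)"
proof (cases q)
  case (Pair u w)
  show ?thesis using r unfolding Pair
    apply (simp add: GG_def PP_def AB)
    apply (simp add: sc_def fun_eq_iff prod_eq_iff field_simps)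
    done
qed

lemma bij3: "bij_betw f X X \<Longrightarrow> bij_betw g X X \<Longrightarrow> bij_betw h X X \<Longrightarrow> bij_betw (\<lambda>q. h (g (f q))) X X"
  using bij_betw_trans[of f X X g X] bij_betw_trans[of "g \<circ> f" X X h X] by (simp add: comp_def)

lemma spec_sim:
  assumes r: "r > 0" and AB: "\<And>u. A (sc 1 r u) = sc r (r*r) (B u)"
  shows "cspectrum (Cw \<Omega> \<omega>) A = (\<lambda>z. of_real r * z) ` cspectrum (Cw \<Omega> \<omega>) B"
proof -
  let ?X = "Cw \<Omega> \<omega> \<times> Cw \<Omega> \<omega>"
  have eq: "bij_betw (GG A z) ?X ?X \<longleftrightarrow> bij_betw (GG B (z / of_real r)) ?X ?X" for z
  proof
    have e1: "GG A z q = PP r (r*r) (GG B (z / of_real r) (PP 1 (1/r) q))" for q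
      using GG_sim[of r A B, OF r AB, of z "PP 1 (1/r) q"] r by (simp add: PP_PP PP_11)
    have e2: "GG B (z / of_real r) q = PP (1/r) (1/(r*r)) (GG A z (PP 1 r q))" for q
      using GG_sim[of r A B, OF r AB, of z q] r by (simp add: PP_PP PP_11)
    show "bij_betw (GG A z) ?X ?X \<Longrightarrow> bij_betw (GG B (z / of_real r)) ?X ?X"
      using bij3[OF PP_bij[of 1 r] _ PP_bij[of "1/r" "1/(r*r)"], of "GG A z"] r
      by (simp add: e2[abs_def])
    show "bij_betw (GG B (z / of_real r)) ?X ?X \<Longrightarrow> bij_betw (GG A z) ?X ?X"
      using bij3[OF PP_bij[of 1 "1/r"] _ PP_bij[of r "r*r"], of "GG B (z / of_real r)"] r
      by (simp add: e1[abs_def])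
  qed
  show ?thesis
  proof (rule set_eqI)
    fix z
    have zz: "z = of_real r * (z / of_real r)" for z :: complex using r by simp
    show "z \<in> cspectrum (Cw \<Omega> \<omega>) A \<longleftrightarrow> z \<in> (\<lambda>z. of_real r * z) ` cspectrum (Cw \<Omega> \<omega>) B"
      using r by (auto simp: cspectrum_GG eq intro!: rev_image_eqI[of "z / of_real r"] zz)
  qed
qed

lemma srad_sim:
  assumes r: "r > 0" and AB: "\<And>u. A (sc 1 r u) = sc r (r*r) (B u)"
  shows "spectral_radius (Cw \<Omega> \<omega>) A = r * spectral_radius (Cw \<Omega> \<omega>) B"
proof -
  have "(SUP z \<in> cspectrum (Cw \<Omega> \<omega>) A. ennreal (cmod z)) = (SUP z \<in> cspectrum (Cw \<Omega> \<omega>) B. ennreal (cmod (of_real r * z)))"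
    unfolding spec_sim[of r A B, OF r AB] by (simp add: image_image)
  also have "\<dots> = (SUP z \<in> cspectrum (Cw \<Omega> \<omega>) B. ennreal r * ennreal (cmod z))"
    using r by (simp add: norm_mult ennreal_mult)
  also have "\<dots> = ennreal r * (SUP z \<in> cspectrum (Cw \<Omega> \<omega>) B. ennreal (cmod z))"
    by (simp add: SUP_mult_left_ennreal)
  finally show ?thesis using r unfolding spectral_radius_def by (simp add: enn2real_mult)
qed

lemma Lop_sc:
  assumes U: "\<forall>t s. lin_op (U t s)" and V: "\<forall>t s. lin_op (V t s)"
  shows "Lop \<Omega> U V c \<alpha> \<beta> Mstar N p l (sc a b v) = sc b a (Lop \<Omega> U V c \<alpha> \<beta> Mstar N p l v)"
proof -
  have e1: "U t (t - s) (\<lambda>y. c * \<beta> (t - s) y * (b * snd (v (t - s) y))) x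
     = b * U t (t - s) (\<lambda>y. c * \<beta> (t - s) y * snd (v (t - s) y)) x" for t s x
  proof -
    have "(\<lambda>y. c * \<beta> (t - s) y * (b * snd (v (t - s) y))) = (\<lambda>y. b * (c * \<beta> (t - s) y * snd (v (t - s) y)))"
      by (simp add: fun_eq_iff algebra_simps)
    then show ?thesis using lin_op_scale[of "U t (t-s)" b] U by simp
  qed
  have e2: "V t (t - s) (\<lambda>y. \<alpha> * \<beta> (t - s) y * p * Mstar (t - s) y * (a * fst (v (t - s) y)) / (l * N y)) x
     = a * V t (t - s) (\<lambda>y. \<alpha> * \<beta> (t - s) y * p * Mstar (t - s) y * fst (v (t - s) y) / (l * N y)) x" for t s x
  proof -
    have "(\<lambda>y. \<alpha> * \<beta> (t - s) y * p * Mstar (t - s) y * (a * fst (v (t - s) y)) / (l * N y))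
       = (\<lambda>y. a * (\<alpha> * \<beta> (t - s) y * p * Mstar (t - s) y * fst (v (t - s) y) / (l * N y)))"
      by (simp add: fun_eq_iff algebra_simps)
    moreover have "V t (t - s) (\<lambda>y. a * (\<alpha> * \<beta> (t - s) y * p * Mstar (t - s) y * fst (v (t - s) y) / (l * N y)))
       = (\<lambda>x. a * V t (t - s) (\<lambda>y. \<alpha> * \<beta> (t - s) y * p * Mstar (t - s) y * fst (v (t - s) y) / (l * N y)) x)"
      by (rule lin_op_scale) (use V in blast)
    ultimately show ?thesis by (simp only:)
  qed
  show ?thesis
    unfolding Lop_def Psi_def Fop_def
    by (simp add: fun_eq_iff sc_def e1 e2 zero_prod_def)
qed

lemma Lop_pl:
  assumes V: "\<forall>t s. lin_op (V t s)" and l: "l \<noteq> 0"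
  shows "Lop \<Omega> U V c \<alpha> \<beta> Mstar N p l v = sc 1 (p / l) (Lop \<Omega> U V c \<alpha> \<beta> Mstar N 1 1 v)"
proof -
  have e2: "V t (t - s) (\<lambda>y. \<alpha> * \<beta> (t - s) y * p * Mstar (t - s) y * fst (v (t - s) y) / (l * N y)) x
     = (p / l) * V t (t - s) (\<lambda>y. \<alpha> * \<beta> (t - s) y * Mstar (t - s) y * fst (v (t - s) y) / N y) x" for t s x
  proof -
    have "(\<lambda>y. \<alpha> * \<beta> (t - s) y * p * Mstar (t - s) y * fst (v (t - s) y) / (l * N y))
       = (\<lambda>y. (p / l) * (\<alpha> * \<beta> (t - s) y * Mstar (t - s) y * fst (v (t - s) y) / N y))"
      using l by (simp add: fun_eq_iff field_simps)
    moreover have "V t (t - s) (\<lambda>y. (p / l) * (\<alpha> * \<beta> (t - s) y * Mstar (t - s) y * fst (v (t - s) y) / N y))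
       = (\<lambda>x. (p / l) * V t (t - s) (\<lambda>y. \<alpha> * \<beta> (t - s) y * Mstar (t - s) y * fst (v (t - s) y) / N y) x)"
      by (rule lin_op_scale) (use V in blast)
    ultimately show ?thesis by (simp only:)
  qed
  show ?thesis
    unfolding Lop_def Psi_def Fop_def
    by (simp add: fun_eq_iff sc_def e2 zero_prod_def)
qed

lemma srad_pl:
  assumes U: "\<forall>t s. lin_op (U t s)" and V: "\<forall>t s. lin_op (V t s)" and l: "0 < l" "l \<le> p"
  shows "spectral_radius (Cw \<Omega> \<omega>) (Lop \<Omega> U V c \<alpha> \<beta> Mstar N p l)
     = sqrt (p / l) * spectral_radius (Cw \<Omega> \<omega>) (Lop \<Omega> U V c \<alpha> \<beta> Mstar N 1 1)"
proof (rule srad_sim)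
  show r: "0 < sqrt (p / l)" using l by simp
  fix u
  have rr: "sqrt (p / l) * sqrt (p / l) = p / l" using l by simp
  show "Lop \<Omega> U V c \<alpha> \<beta> Mstar N p l (sc 1 (sqrt (p / l)) u) =
         sc (sqrt (p / l)) (sqrt (p / l) * sqrt (p / l)) (Lop \<Omega> U V c \<alpha> \<beta> Mstar N 1 1 u)"
    unfolding Lop_pl[OF V, of l, OF order.strict_implies_not_eq[OF l(1), symmetric]] Lop_sc[OF U V] sc_sc rr
    by simp
qed


theorem mainTheorem7:
  fixes \<Omega> :: "'a::euclidean_space set"
    and \<omega> c1 c2 \<alpha>1 \<alpha>2 :: real
    and \<beta> Mstar :: "real \<Rightarrow> 'a \<Rightarrow> real"
    and N :: "'a \<Rightarrow> real"
    and U1 U2 V :: "real \<Rightarrow> real \<Rightarrow> ('a \<Rightarrow> real) \<Rightarrow> ('a \<Rightarrow> real)"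
    and R1 R2 R0 :: "real \<Rightarrow> real \<Rightarrow> real"
  assumes "bounded \<Omega>" and "open \<Omega>" and "connected \<Omega>" and "\<Omega> \<noteq> {}"
    and "\<omega> > 0" and "c1 > 0" and "c2 > 0" and "\<alpha>1 > 0" and "\<alpha>2 > 0"
    and "continuous_on (UNIV \<times> closure \<Omega>) (\<lambda>z. \<beta> (fst z) (snd z))"
    and "\<forall>t x. \<beta> t x \<ge> 0" and "\<forall>t x. \<beta> (t + \<omega>) x = \<beta> t x"
    and "\<exists>t. \<exists>x\<in>closure \<Omega>. \<beta> t x \<noteq> 0"
    and "continuous_on (closure \<Omega>) N" and "\<forall>x\<in>closure \<Omega>. N x > 0"
    and "continuous_on (UNIV \<times> closure \<Omega>) (\<lambda>z. Mstar (fst z) (snd z))"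
    and "\<forall>t. \<forall>x\<in>closure \<Omega>. Mstar t x > 0" and "\<forall>t x. Mstar (t + \<omega>) x = Mstar t x"
    and "\<forall>t s. lin_op (U1 t s)" and "\<forall>t s. lin_op (U2 t s)" and "\<forall>t s. lin_op (V t s)"
  defines "R1 \<equiv> (\<lambda>p l. spectral_radius (Cw \<Omega> \<omega>) (Lop \<Omega> U1 V c1 \<alpha>1 \<beta> Mstar N p l))"
    and "R2 \<equiv> (\<lambda>p l. spectral_radius (Cw \<Omega> \<omega>) (Lop \<Omega> U2 V c2 \<alpha>2 \<beta> Mstar N p l))"
    and "R0 \<equiv> (\<lambda>p l. max (R1 p l) (R2 p l))"
  shows "(\<forall>p l p' l'. 0 < l \<and> l \<le> p \<and> 0 < l' \<and> l' \<le> p' \<and> l / p = l' / p' \<longrightarrow>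
             R1 p l = R1 p' l' \<and> R2 p l = R2 p' l')
       \<and> (\<forall>p l. 0 < l \<and> l \<le> p \<longrightarrow>
             R1 p l = R1 1 1 / sqrt (l / p) \<and> R2 p l = R2 1 1 / sqrt (l / p)
             \<and> R0 p l = max (R1 1 1) (R2 1 1) / sqrt (l / p))
       \<and> (\<forall>p l p' l'. 0 < l \<and> l \<le> p \<and> 0 < l' \<and> l' \<le> p' \<and> l / p \<le> l' / p' \<longrightarrow>
             R0 p' l' \<le> R0 p l)"
  proof -
  have nn: "spectral_radius X A \<ge> 0" for X A by (simp add: spectral_radius_def)
  have S1: "R1 p l = sqrt (p / l) * R1 1 1" if "0 < l" "l \<le> p" for p l
    unfolding R1_def using srad_pl[OF assms(19) assms(21) that] by simp
  have S2: "R2 p l = sqrt (p / l) * R2 1 1" if "0 < l" "l \<le> p" for p l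
    unfolding R2_def using srad_pl[OF assms(20) assms(21) that] by simp
  have m0: "max (R1 1 1) (R2 1 1) \<ge> 0" unfolding R1_def by (simp add: nn max.coboundedI1)
  have S0: "R0 p l = sqrt (p / l) * max (R1 1 1) (R2 1 1)" if "0 < l" "l \<le> p" for p l
    unfolding R0_def S1[OF that] S2[OF that] using that by (simp add: max_mult_distrib_left)
  have inv: "sqrt (p / l) * X = X / sqrt (l / p)" if "0 < l" "l \<le> p" for p l X :: real
    using that by (simp add: real_sqrt_divide field_simps)
  have inv2: "p / l = p' / l'" if "0 < l" "l \<le> p" "0 < l'" "l' \<le> p'" "l / p = l' / p'" for p l p' l' :: real
    using arg_cong[OF that(5), of inverse] by simp
  have mono: "sqrt (p' / l') \<le> sqrt (p / l)" if "0 < l" "l \<le> p" "0 < l'" "l' \<le> p'" "l / p \<le> l' / p'" for p l p' l' :: real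
  proof -
    have "p' / l' = 1 / (l' / p')" "p / l = 1 / (l / p)" using that by auto
    moreover have "1 / (l' / p') \<le> 1 / (l / p)" using that by (intro divide_left_mono mult_pos_pos) auto
    ultimately show ?thesis by simp
  qed
  show ?thesis
  proof (intro conjI allI impI)
    fix p l p' l' :: real
    assume h: "0 < l \<and> l \<le> p \<and> 0 < l' \<and> l' \<le> p' \<and> l / p = l' / p'"
    have e: "p / l = p' / l'" using inv2[of l p l' p'] h by blast
    show "R1 p l = R1 p' l'" using h S1[of l p] S1[of l' p'] e by simp
    show "R2 p l = R2 p' l'" using h S2[of l p] S2[of l' p'] e by simp
  next
    fix p l :: real
    assume h: "0 < l \<and> l \<le> p"
    show "R1 p l = R1 1 1 / sqrt (l / p)" using h S1[of l p] inv[of l p] by simp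
    show "R2 p l = R2 1 1 / sqrt (l / p)" using h S2[of l p] inv[of l p] by simp
    show "R0 p l = max (R1 1 1) (R2 1 1) / sqrt (l / p)" using h S0[of l p] inv[of l p] by simp
  next
    fix p l p' l' :: real
    assume h: "0 < l \<and> l \<le> p \<and> 0 < l' \<and> l' \<le> p' \<and> l / p \<le> l' / p'"
    have "sqrt (p' / l') \<le> sqrt (p / l)" using mono[of l p l' p'] h by blast
    then have "sqrt (p' / l') * max (R1 1 1) (R2 1 1) \<le> sqrt (p / l) * max (R1 1 1) (R2 1 1)"
      using m0 by (rule mult_right_mono)
    then show "R0 p' l' \<le> R0 p l" using h S0[of l p] S0[of l' p'] by simp
  qed
qed

end
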